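(* For arbitrary positive integers $m$ and $n$, there exist a finite alphabet $A$, a letter $a\in A$, and languages $K,L\subseteq A^*$ with syntactic monoids $M$ and $N$ satisfying $|M|=m$, $|N|=n$, such that the syntactic monoid of the language $KaL=\{\,uav\mid u\in K,\ v\in L\,\}$ has exactly $mn(2^{mn}-1)+1$ elements.
   Context: The syntactic congruence of $R\subseteq A^*$ is $u\sim_R v$ iff for all $p,q\in A^*$, $puq\in R\Leftrightarrow pvq\in R$; the syntactic monoid of $R$ is $A^*/{\sim_R}$. *)

theory Defs
  imports Main
begin

definition syntactic_congruence :: "'a set \<Rightarrow> 'a list set \<Rightarrow> ('a list \<times> 'a list) set" where
  "syntactic_congruence A R =
     {(u, v). u \<in> lists A \<and> v \<in> lists A \<and>
        (\<forall>p \<in> lists A. \<forall>q \<in> lists A. (p @ u @ q \<in> R) = (p @ v @ q \<in> R))}"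

definition syntactic_monoid :: "'a set \<Rightarrow> 'a list set \<Rightarrow> 'a list set set" where
  "syntactic_monoid A R = lists A // syntactic_congruence A R"

definition lang_concat_letter :: "'a list set \<Rightarrow> 'a \<Rightarrow> 'a list set \<Rightarrow> 'a list set" where
  "lang_concat_letter K a L = {u @ [a] @ v | u v. u \<in> K \<and> v \<in> L}"

end

theory Submission imports Defs begin

definition mu :: "nat \<Rightarrow> nat list \<Rightarrow> nat" where
  "mu m w = length (filter (\<lambda>x. x = 1) w) mod m"
definition nu :: "nat \<Rightarrow> nat list \<Rightarrow> nat" where
  "nu n w = length (filter (\<lambda>x. x = 2) w) mod n"
definition PP :: "nat \<Rightarrow> nat \<Rightarrow> nat list \<Rightarrow> (nat \<times> nat) set" where
  "PP m n w = {(mu m u, nu n v) | u v. w = u @ 0 # v}"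

lemma mu_app: "mu m (x @ y) = (mu m x + mu m y) mod m"
  unfolding mu_def by (simp add: mod_add_eq)
lemma nu_app: "nu n (x @ y) = (nu n x + nu n y) mod n"
  unfolding nu_def by (simp add: mod_add_eq)
lemma mu_Cons0: "mu m (0 # x) = mu m x" and nu_Cons0: "nu n (0 # x) = nu n x"
  unfolding mu_def nu_def by simp_all

lemma PP_app: "PP m n (x @ y) = (\<lambda>(i,j). (i, (j + nu n y) mod n)) ` PP m n x
   \<union> (\<lambda>(i,j). ((mu m x + i) mod m, j)) ` PP m n y"
proof (rule set_eqI, rule iffI)
  fix z assume "z \<in> PP m n (x @ y)"
  then obtain u v where z: "z = (mu m u, nu n v)" and e: "x @ y = u @ 0 # v"
    unfolding PP_def by blast
  from e obtain us where "(x = u @ us \<and> us @ y = 0 # v) \<or> (x @ us = u \<and> y = us @ 0 # v)"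
    by (auto simp: append_eq_append_conv2)
  then show "z \<in> (\<lambda>(i,j). (i, (j + nu n y) mod n)) ` PP m n x
   \<union> (\<lambda>(i,j). ((mu m x + i) mod m, j)) ` PP m n y"
  proof
    assume h: "x = u @ us \<and> us @ y = 0 # v"
    show ?thesis
    proof (cases us)
      case Nil
      then have "(mu m [], nu n v) \<in> PP m n y" using h unfolding PP_def by auto
      moreover have "z = ((mu m x + mu m []) mod m, nu n v)"
        using h Nil z by (simp add: mu_def)
      ultimately show ?thesis by force
    next
      case (Cons c us')
      then have c: "c = 0" "v = us' @ y" using h by auto
      then have "(mu m u, nu n us') \<in> PP m n x" using h Cons unfolding PP_def by auto
      moreover have "z = (mu m u, (nu n us' + nu n y) mod n)"
        using z c by (simp add: nu_app)
      ultimately show ?thesis by force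
    qed
  next
    assume h: "x @ us = u \<and> y = us @ 0 # v"
    then have "(mu m us, nu n v) \<in> PP m n y" unfolding PP_def by auto
    moreover have "z = ((mu m x + mu m us) mod m, nu n v)" using h z by (auto simp: mu_app)
    ultimately show ?thesis by force
  qed
next
  fix z assume "z \<in> (\<lambda>(i,j). (i, (j + nu n y) mod n)) ` PP m n x
   \<union> (\<lambda>(i,j). ((mu m x + i) mod m, j)) ` PP m n y"
  then show "z \<in> PP m n (x @ y)"
  proof
    assume "z \<in> (\<lambda>(i,j). (i, (j + nu n y) mod n)) ` PP m n x"
    then obtain u v where "x = u @ 0 # v" "z = (mu m u, (nu n v + nu n y) mod n)"
      unfolding PP_def by auto
    then show ?thesis unfolding PP_def
      by (intro CollectI exI[of _ u] exI[of _ "v @ y"]) (auto simp: nu_app)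
  next
    assume "z \<in> (\<lambda>(i,j). ((mu m x + i) mod m, j)) ` PP m n y"
    then obtain u v where "y = u @ 0 # v" "z = ((mu m x + mu m u) mod m, nu n v)"
      unfolding PP_def by auto
    then show ?thesis unfolding PP_def
      by (intro CollectI exI[of _ "x @ u"] exI[of _ v]) (auto simp: mu_app)
  qed
qed

lemma PP_no0: "0 \<notin> set w \<Longrightarrow> PP m n w = {}"
  unfolding PP_def by auto

lemma PP_single: "PP m n [0] = {(0,0)}"
  unfolding PP_def by (auto simp: mu_def nu_def Cons_eq_append_conv)


lemma modinv: assumes "a < (m::nat)" "b < m" shows "((m - a) mod m + b) mod m = 0 \<longleftrightarrow> b = a"
proof (cases "a = 0")
  case True then show ?thesis using assms by simp
next
  case False
  then have "(m - a) mod m = m - a" using assms by simp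
  moreover have "(m - a + b) mod m = 0 \<longleftrightarrow> b = a"
  proof
    assume h: "(m - a + b) mod m = 0"
    have "m - a + b > 0" "m - a + b < 2 * m" using assms False by auto
    moreover from h obtain k where "m - a + b = m * k" by (auto simp: mod_eq_0_iff_dvd dvd_def)
    ultimately have "m * k < m * 2" "m * k > 0" by auto
    then have "k < 2" "k > 0" by (metis mult_less_cancel1, simp)
    then have "k = 1" by arith
    then show "b = a" using \<open>m - a + b = m * k\<close> assms by simp
  qed (use assms in simp)
  ultimately show ?thesis by simp
qed

lemma PP_sub: "m > 0 \<Longrightarrow> n > 0 \<Longrightarrow> PP m n w \<subseteq> {..<m} \<times> {..<n}"
  unfolding PP_def mu_def nu_def by auto

lemma mu_rep1[simp]: "mu m (replicate k 1) = k mod m" unfolding mu_def by simp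
lemma mu_rep1'[simp]: "mu m (replicate k (Suc 0)) = k mod m" unfolding mu_def by simp
lemma nu_rep1'[simp]: "nu n (replicate k (Suc 0)) = 0" unfolding nu_def by simp
lemma nu_rep1[simp]: "nu n (replicate k 1) = 0" unfolding nu_def by simp
lemma mu_rep2[simp]: "mu m (replicate k 2) = 0" unfolding mu_def by simp
lemma nu_rep2[simp]: "nu n (replicate k 2) = k mod n" unfolding nu_def by simp
lemma PP_rep: "c \<noteq> 0 \<Longrightarrow> PP m n (replicate k c) = {}" by (rule PP_no0) simp
lemma mu0: "mu m [0] = 0" "nu n [0] = 0" "mu m [] = 0" "nu n [] = 0" unfolding mu_def nu_def by simp_all

lemma ctx: "(0,0) \<in> PP m n (p @ w @ q) \<longleftrightarrow>
   (\<exists>a b. (a,b) \<in> PP m n w \<and> m dvd mu m p + a \<and> n dvd b + nu n q) \<or>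
   (\<exists>b. (0,b) \<in> PP m n p \<and> n dvd b + (nu n w + nu n q)) \<or>
   (\<exists>a. (a,0) \<in> PP m n q \<and> m dvd mu m p + (mu m w + a))"
  apply (simp only: PP_app nu_app mu_app image_Un Un_iff image_image)
  apply (auto simp: image_iff mod_simps add.assoc)
     apply (rule_tac x="(a,b)" in bexI; simp)+
   apply (erule_tac x="(0,b)" in ballE; simp)
  subgoal for a
    apply (drule bspec[where A="PP m n q" and x="(a,0)"], assumption)
    by (simp add: mod_simps)
  done


lemma quot_card:
  assumes "\<And>u v. u \<in> lists A \<Longrightarrow> v \<in> lists A \<Longrightarrow>
             (u,v) \<in> syntactic_congruence A X \<longleftrightarrow> f u = f v"
  shows "finite (syntactic_monoid A X) = finite (f ` lists A)"
    and "card (syntactic_monoid A X) = card (f ` lists A)"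
proof -
  let ?g = "\<lambda>z. {y \<in> lists A. f y = z}"
  have eq: "syntactic_monoid A X = ?g ` (f ` lists A)"
  proof -
    have "syntactic_congruence A X `` {x} = {y \<in> lists A. f y = f x}" if "x \<in> lists A" for x
    proof (rule set_eqI)
      fix y
      show "y \<in> syntactic_congruence A X `` {x} \<longleftrightarrow> y \<in> {y \<in> lists A. f y = f x}"
      proof (cases "y \<in> lists A")
        case True then show ?thesis using assms[OF that True] by auto
      next
        case False then show ?thesis unfolding syntactic_congruence_def by auto
      qed
    qed
    then show ?thesis unfolding syntactic_monoid_def quotient_def by auto
  qed
  have inj: "inj_on ?g (f ` lists A)"
  proof (rule inj_onI)
    fix z1 z2 assume "z1 \<in> f ` lists A" "z2 \<in> f ` lists A" "?g z1 = ?g z2"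
    then obtain y where "y \<in> lists A" "f y = z1" by auto
    with \<open>?g z1 = ?g z2\<close> have "y \<in> ?g z2" by auto
    then show "z1 = z2" using \<open>f y = z1\<close> by auto
  qed
  show "finite (syntactic_monoid A X) = finite (f ` lists A)"
    unfolding eq using finite_image_iff[OF inj] .
  show "card (syntactic_monoid A X) = card (f ` lists A)"
    unfolding eq using card_image[OF inj] .
qed

lemma dvd_mod_left: "(m::nat) dvd (a mod m + b) \<longleftrightarrow> m dvd (a + b)"
  by (simp add: dvd_eq_mod_eq_0 mod_simps)

lemma modinv2: assumes "x < (m::nat)" "y < m" shows "m dvd (y + (m - x)) \<longleftrightarrow> y = x"
proof
  assume h: "m dvd (y + (m - x))"
  show "y = x"
  proof (rule ccontr)
    assume ne: "y \<noteq> x"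
    obtain k where k: "y + (m - x) = m * k" using h by (auto simp: dvd_def)
    have "m * k > 0" using assms k by linarith
    moreover have "m * k < m * 2" using assms k by linarith
    moreover have "m * k \<noteq> m" using assms ne k by linarith
    ultimately have "k < 2" "k > 0" "k \<noteq> 1" by (metis mult_less_cancel1, simp, simp)
    then show False by arith
  qed
qed (use assms in simp)

lemma Klang_cong:
  fixes m :: nat and A :: "nat set"
  assumes "m > 0" "1 \<in> A" "u \<in> lists A" "v \<in> lists A"
  shows "(u,v) \<in> syntactic_congruence A {w \<in> lists A. mu m w = 0} \<longleftrightarrow> mu m u = mu m v"
proof
  assume h: "(u,v) \<in> syntactic_congruence A {w \<in> lists A. mu m w = 0}"
  let ?q = "replicate (m - mu m u) (1::nat)"
  have q: "?q \<in> lists A" using assms by auto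
  have lt: "mu m u < m" "mu m v < m" using assms by (auto simp: mu_def)
  from h q have "([] @ u @ ?q \<in> {w \<in> lists A. mu m w = 0}) = ([] @ v @ ?q \<in> {w \<in> lists A. mu m w = 0})"
    unfolding syntactic_congruence_def by blast
  then have "(mu m (u @ ?q) = 0) = (mu m (v @ ?q) = 0)" using assms q by auto
  then have "(m dvd (mu m u + (m - mu m u))) = (m dvd (mu m v + (m - mu m u)))"
    by (simp add: mu_app mu_rep1 mu_rep1' dvd_eq_mod_eq_0 mod_simps)
  then show "mu m u = mu m v" using modinv2[OF lt(1) lt(1)] modinv2[OF lt(1) lt(2)] by simp
next
  assume "mu m u = mu m v"
  then show "(u,v) \<in> syntactic_congruence A {w \<in> lists A. mu m w = 0}"
    using assms unfolding syntactic_congruence_def by (auto simp: mu_app)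
qed

lemma Llang_cong:
  fixes n :: nat and A :: "nat set"
  assumes "n > 0" "2 \<in> A" "u \<in> lists A" "v \<in> lists A"
  shows "(u,v) \<in> syntactic_congruence A {w \<in> lists A. nu n w = 0} \<longleftrightarrow> nu n u = nu n v"
proof
  assume h: "(u,v) \<in> syntactic_congruence A {w \<in> lists A. nu n w = 0}"
  let ?q = "replicate (n - nu n u) (2::nat)"
  have q: "?q \<in> lists A" using assms by auto
  have lt: "nu n u < n" "nu n v < n" using assms by (auto simp: nu_def)
  from h q have "([] @ u @ ?q \<in> {w \<in> lists A. nu n w = 0}) = ([] @ v @ ?q \<in> {w \<in> lists A. nu n w = 0})"
    unfolding syntactic_congruence_def by blast
  then have "(nu n (u @ ?q) = 0) = (nu n (v @ ?q) = 0)" using assms q by auto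
  then have "(n dvd (nu n u + (n - nu n u))) = (n dvd (nu n v + (n - nu n u)))"
    by (simp add: nu_app nu_rep2 dvd_eq_mod_eq_0 mod_simps)
  then show "nu n u = nu n v" using modinv2[OF lt(1) lt(1)] modinv2[OF lt(1) lt(2)] by simp
next
  assume "nu n u = nu n v"
  then show "(u,v) \<in> syntactic_congruence A {w \<in> lists A. nu n w = 0}"
    using assms unfolding syntactic_congruence_def by (auto simp: nu_app)
qed

lemma mu_image: "m > 0 \<Longrightarrow> 1 \<in> A \<Longrightarrow> mu m ` lists A = {..<m}"
  apply (auto simp: mu_def)
  subgoal for x by (rule image_eqI[where x="replicate x 1"]) (auto simp: mu_def[symmetric] mu_rep1)
  done

lemma nu_image: "n > 0 \<Longrightarrow> 2 \<in> A \<Longrightarrow> nu n ` lists A = {..<n}"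
  apply (auto simp: nu_def)
  subgoal for x by (rule image_eqI[where x="replicate x 2"]) (auto simp: nu_def[symmetric] nu_rep2)
  done


lemma dvd_mod_gen: "(m::nat) dvd X \<longleftrightarrow> m dvd Y" if "X mod m = Y mod m"
  using that by (simp add: dvd_eq_mod_eq_0)

lemma ar1: assumes "i < (m::nat)"
  shows "m dvd ((m-i) mod m + (y + (i + (m - x)) mod m)) \<longleftrightarrow> m dvd (y + (m - x))"
proof -
  have e: "(m-i) + (y + (i + (m - x))) = m + (y + (m - x))" using assms by arith
  have "((m-i) mod m + (y + (i + (m - x)) mod m)) mod m = ((m-i) + (y + (i + (m - x)))) mod m"
    by (metis mod_add_left_eq mod_add_right_eq)
  also have "\<dots> = (m + (y + (m - x))) mod m" by (simp only: e)
  also have "\<dots> = (y + (m - x)) mod m" by simp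
  finally show ?thesis by (rule dvd_mod_gen)
qed

lemma ar2: assumes "i < (m::nat)" "a < m"
  shows "m dvd ((m-i) mod m + a) \<longleftrightarrow> a = i"
proof -
  have "((m-i) mod m + a) mod m = (a + (m - i)) mod m" by (simp add: mod_simps add.commute)
  then show ?thesis using dvd_mod_gen modinv2[OF assms] by metis
qed

lemma PP_q: "PP m n (replicate k 2 @ replicate t 1 @ [0]) = {(t mod m, 0)}"
  by (simp add: PP_app PP_rep PP_single mu_rep1 mu_rep2 nu_rep1 nu_rep2 mu0)

lemma firstdisj:
  assumes "i < m" "j < n" "(i,j) \<notin> PP m n w"
  shows "\<not> (\<exists>a b. (a,b) \<in> PP m n w \<and> m dvd (m-i) mod m + a \<and> n dvd b + (n-j) mod n)"
proof
  assume "\<exists>a b. (a,b) \<in> PP m n w \<and> m dvd (m-i) mod m + a \<and> n dvd b + (n-j) mod n"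
  then obtain a b where ab: "(a,b) \<in> PP m n w" "m dvd (m-i) mod m + a" "n dvd b + (n-j) mod n" by blast
  have "a < m" "b < n" using PP_sub[of m n w] ab assms by auto
  then have "a = i" "b = j" using ar2[OF assms(1)] ar2[OF assms(2)] ab by (auto simp: add.commute)
  then show False using ab assms by simp
qed


lemma ctxA: assumes "i < m" "j < n"
  shows "(0,0) \<in> PP m n (replicate (m-i) 1 @ w @ replicate (n-j) 2) \<longleftrightarrow> (i,j) \<in> PP m n w"
proof -
  have m: "m > 0" "n > 0" using assms by auto
  have e: "(0,0) \<in> PP m n (replicate (m-i) 1 @ w @ replicate (n-j) 2) \<longleftrightarrow>
    (\<exists>a b. (a,b) \<in> PP m n w \<and> m dvd (m-i) mod m + a \<and> n dvd b + (n-j) mod n)"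
    unfolding ctx by (simp add: PP_rep)
  show ?thesis
  proof
    assume "(0,0) \<in> PP m n (replicate (m-i) 1 @ w @ replicate (n-j) 2)"
    then show "(i,j) \<in> PP m n w" using firstdisj[OF assms] e by blast
  next
    assume h: "(i,j) \<in> PP m n w"
    have "m dvd (m-i) mod m + i" using ar2[OF assms(1) assms(1)] by simp
    moreover have "n dvd j + (n-j) mod n" using ar2[OF assms(2) assms(2)] by (simp add: add.commute)
    ultimately show "(0,0) \<in> PP m n (replicate (m-i) 1 @ w @ replicate (n-j) 2)" using e h by blast
  qed
qed

lemma ar1': assumes "j < (n::nat)"
  shows "n dvd ((j + (n - y)) mod n + (z + (n - j) mod n)) \<longleftrightarrow> n dvd (z + (n - y))"
proof -
  have e: "(j + (n - y)) + (z + (n - j)) = n + (z + (n - y))" using assms by arith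
  have "((j + (n - y)) mod n + (z + (n - j) mod n)) mod n = ((j + (n - y)) + (z + (n - j))) mod n"
    by (metis mod_add_left_eq mod_add_right_eq)
  also have "\<dots> = (n + (z + (n - y))) mod n" by (simp only: e)
  also have "\<dots> = (z + (n - y)) mod n" by simp
  finally show ?thesis by (rule dvd_mod_gen)
qed

lemma mu_mod[simp]: "mu m w mod m = mu m w" and nu_mod[simp]: "nu n w mod n = nu n w"
  unfolding mu_def nu_def by simp_all

lemma PP_Cons0: "PP m n (0 # r) = insert (0, nu n r) ((\<lambda>(i,j). (i mod m, j)) ` PP m n r)"
  using PP_app[of m n "[0]" r] by (simp add: PP_single mu0)

lemma ctxB:
  assumes "i < m" "j < n" "(i,j) \<notin> PP m n w" "x < m"
  shows "(0,0) \<in> PP m n (replicate (m-i) 1 @ w @ (replicate (n-j) 2 @ replicate (i + (m - x)) 1 @ [0]))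
     \<longleftrightarrow> mu m w = x"
proof -
  let ?p = "replicate (m-i) (1::nat)" and ?q = "replicate (n-j) 2 @ replicate (i + (m - x)) 1 @ [0::nat]"
  have a: "mu m ?p = (m-i) mod m" "PP m n ?p = {}" by (simp_all add: PP_rep)
  have b: "nu n ?q = (n-j) mod n" by (simp add: nu_app mu0)
  have c: "PP m n ?q = {((i + (m - x)) mod m, 0)}" by (rule PP_q)
  have "(0,0) \<in> PP m n (?p @ w @ ?q) \<longleftrightarrow> m dvd ((m-i) mod m + (mu m w + (i + (m - x)) mod m))"
    unfolding ctx a b c using firstdisj[OF assms(1-3)] by auto
  also have "\<dots> \<longleftrightarrow> m dvd (mu m w + (m - x))" by (rule ar1[OF assms(1)])
  also have "\<dots> \<longleftrightarrow> mu m w = x" using modinv2[OF assms(4)] assms by (simp add: mu_def)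
  finally show ?thesis .
qed

lemma ctxC:
  assumes "i < m" "j < n" "(i,j) \<notin> PP m n w" "y < n"
  shows "(0,0) \<in> PP m n (([0] @ replicate (j + (n - y)) 2 @ replicate (m-i) 1) @ w @ replicate (n-j) 2)
     \<longleftrightarrow> nu n w = y"
proof -
  let ?p = "[0::nat] @ replicate (j + (n - y)) 2 @ replicate (m-i) 1" and ?q = "replicate (n-j) (2::nat)"
  have a: "mu m ?p = (m-i) mod m" by (simp add: mu_app mu_Cons0)
  have a2: "PP m n ?p = {(0, (j + (n - y)) mod n)}"
    by (simp add: PP_Cons0 PP_no0 nu_app)
  have b: "nu n ?q = (n-j) mod n" "PP m n ?q = {}" by (simp_all add: PP_rep)
  have "(0,0) \<in> PP m n (?p @ w @ ?q) \<longleftrightarrow> n dvd ((j + (n - y)) mod n + (nu n w + (n-j) mod n))"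
    unfolding ctx a a2 b using firstdisj[OF assms(1-3)] by auto
  also have "\<dots> \<longleftrightarrow> n dvd (nu n w + (n - y))" by (rule ar1'[OF assms(2)])
  also have "\<dots> \<longleftrightarrow> nu n w = y" using modinv2[OF assms(4)] assms by (simp add: nu_def)
  finally show ?thesis .
qed

lemma ctxFull:
  assumes "m > 0" "n > 0" "PP m n w = {..<m} \<times> {..<n}"
  shows "(0,0) \<in> PP m n (p @ w @ q)"
proof -
  have lt: "mu m p < m" "nu n q < n" using assms by (auto simp: mu_def nu_def)
  have "m dvd mu m p + (m - mu m p) mod m"
    using dvd_mod_gen[of "mu m p + (m - mu m p) mod m" m "mu m p + (m - mu m p)"]
      modinv2[OF lt(1) lt(1)] by (simp add: mod_add_right_eq)
  moreover have "n dvd nu n q + (n - nu n q) mod n"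
    using dvd_mod_gen[of "nu n q + (n - nu n q) mod n" n "nu n q + (n - nu n q)"]
      modinv2[OF lt(2) lt(2)] by (simp add: mod_add_right_eq)
  then have "n dvd (n - nu n q) mod n + nu n q" by (simp add: add.commute)
  moreover have "((m - mu m p) mod m, (n - nu n q) mod n) \<in> PP m n w" using assms by simp
  ultimately show ?thesis unfolding ctx by blast
qed


lemma memKaL: assumes "0 \<in> A"
  shows "z \<in> lang_concat_letter {w\<in>lists A. mu m w = 0} 0 {w\<in>lists A. nu n w = 0}
     \<longleftrightarrow> z \<in> lists A \<and> (0,0) \<in> PP m n z"
  unfolding lang_concat_letter_def PP_def using assms by fastforce

definition HH :: "nat \<Rightarrow> nat \<Rightarrow> nat list \<Rightarrow> (nat \<times> nat \<times> (nat \<times> nat) set) option" where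
  "HH m n w = (if PP m n w = {..<m} \<times> {..<n} then None else Some (mu m w, nu n w, PP m n w))"

lemma KaL_cong:
  assumes mn: "m > 0" "n > 0" and A: "A = {0,1,2::nat}" and uv: "u \<in> lists A" "v \<in> lists A"
  shows "(u,v) \<in> syntactic_congruence A (lang_concat_letter {w\<in>lists A. mu m w = 0} 0 {w\<in>lists A. nu n w = 0})
     \<longleftrightarrow> HH m n u = HH m n v"
proof -
  let ?S = "{..<m} \<times> {..<n}"
  let ?D = "\<lambda>w p q. (0::nat,0::nat) \<in> PP m n (p @ w @ q)"
  have eqv: "(u,v) \<in> syntactic_congruence A (lang_concat_letter {w\<in>lists A. mu m w = 0} 0 {w\<in>lists A. nu n w = 0})
     \<longleftrightarrow> (\<forall>p\<in>lists A. \<forall>q\<in>lists A. ?D u p q = ?D v p q)"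
    unfolding syntactic_congruence_def using uv memKaL[where A=A and m=m and n=n] A by auto
  show ?thesis
  proof
    assume H: "HH m n u = HH m n v"
    have "?D u p q = ?D v p q" for p q
    proof (cases "PP m n u = ?S")
      case True
      then have "PP m n v = ?S" using H unfolding HH_def by (auto split: if_splits)
      then show ?thesis using True ctxFull[OF mn] by blast
    next
      case False
      then have "PP m n v \<noteq> ?S" "mu m u = mu m v" "nu n u = nu n v" "PP m n u = PP m n v"
        using H unfolding HH_def by (auto split: if_splits)
      then show ?thesis unfolding ctx by simp
    qed
    then show "(u,v) \<in> syntactic_congruence A (lang_concat_letter {w\<in>lists A. mu m w = 0} 0 {w\<in>lists A. nu n w = 0})" using eqv by blast
  next
    assume "(u,v) \<in> syntactic_congruence A (lang_concat_letter {w\<in>lists A. mu m w = 0} 0 {w\<in>lists A. nu n w = 0})"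
    then have D: "\<And>p q. p \<in> lists A \<Longrightarrow> q \<in> lists A \<Longrightarrow> ?D u p q = ?D v p q" using eqv by blast
    show "HH m n u = HH m n v"
    proof (rule ccontr)
      assume ne: "HH m n u \<noteq> HH m n v"
      show False
      proof (cases "PP m n u = PP m n v")
        case False
        then obtain i j where ij: "((i,j) \<in> PP m n u) \<noteq> ((i,j) \<in> PP m n v)" by auto
        then have lt: "i < m" "j < n" using PP_sub[OF mn, of u] PP_sub[OF mn, of v] by auto
        have "replicate (m-i) 1 \<in> lists A" "replicate (n-j) 2 \<in> lists A" using A by auto
        from D[OF this] ctxA[OF lt, of u] ctxA[OF lt, of v] ij show False by simp
      next
        case True
        then have nS: "PP m n u \<noteq> ?S" using ne unfolding HH_def by auto
        then obtain i j where ij: "i < m" "j < n" "(i,j) \<notin> PP m n u"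
          using PP_sub[OF mn, of u] by auto
        have ij2: "(i,j) \<notin> PP m n v" using ij True by simp
        have "mu m u \<noteq> mu m v \<or> nu n u \<noteq> nu n v" using ne True unfolding HH_def by (auto split: if_splits)
        then show False
        proof
          assume neq: "mu m u \<noteq> mu m v"
          have x: "mu m u < m" using mn by (simp add: mu_def)
          have "replicate (m-i) 1 \<in> lists A"
            "replicate (n-j) 2 @ replicate (i + (m - mu m u)) 1 @ [0] \<in> lists A" using A by auto
          from D[OF this] ctxB[OF ij x] ctxB[OF ij(1,2) ij2 x] neq show False by simp
        next
          assume neq: "nu n u \<noteq> nu n v"
          have y: "nu n u < n" using mn by (simp add: nu_def)
          have "[0] @ replicate (j + (n - nu n u)) 2 @ replicate (m-i) 1 \<in> lists A"
            "replicate (n-j) 2 \<in> lists A" using A by auto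
          from D[OF this] ctxC[OF ij y] ctxC[OF ij(1,2) ij2 y] neq show False by simp
        qed
      qed
    qed
  qed
qed


lemma PP_mod: "(a,b) \<in> PP m n w \<Longrightarrow> a mod m = a \<and> b mod n = b"
  unfolding PP_def mu_def nu_def by auto

lemma arr: "i < (m::nat) \<Longrightarrow> (i + ((m - i) mod m + a) mod m) mod m = a mod m"
proof -
  assume "i < m"
  then have e: "i + ((m - i) + a) = m + a" by arith
  have "(i + ((m - i) mod m + a) mod m) mod m = (i + ((m - i) + a)) mod m"
    by (metis mod_add_left_eq mod_add_right_eq)
  also have "\<dots> = a mod m" by (simp only: e) simp
  finally show ?thesis .
qed

lemma arr2: "j < (n::nat) \<Longrightarrow> y < n \<Longrightarrow> ((j + (n - y)) mod n + y) mod n = j"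
proof -
  assume a: "j < n" "y < n"
  then have e: "(j + (n - y)) + y = n + j" by arith
  have "((j + (n - y)) mod n + y) mod n = ((j + (n - y)) + y) mod n"
    by (metis mod_add_left_eq)
  also have "\<dots> = j" using a by (simp only: e) simp
  finally show ?thesis .
qed

lemma realize:
  assumes mn: "m > 0" "n > 0" and A: "0 \<in> A" "1 \<in> A" "2 \<in> A"
    and P: "finite P" "P \<subseteq> {..<m} \<times> {..<n}" and xy: "x < m" "y < n"
  shows "\<exists>w\<in>lists A. mu m w = x \<and> nu n w = y \<and> PP m n w = P"
  using P xy
proof (induction P arbitrary: x y rule: finite_induct)
  case empty
  show ?case
    by (rule bexI[where x="replicate x 1 @ replicate y 2"])
       (use empty A in \<open>auto simp: mu_app nu_app PP_no0\<close>)
next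
  case (insert ij P)
  obtain i j where ij: "ij = (i,j)" by force
  have lt: "i < m" "j < n" using insert ij by auto
  obtain w where w: "w \<in> lists A" "mu m w = x" "nu n w = y" "PP m n w = P"
    using insert by blast
  let ?c1 = "replicate (y + (n - j)) 2 @ replicate i (1::nat)"
  let ?rest = "replicate (j + (n - y)) 2 @ replicate (m - i) 1 @ w"
  have muc1: "mu m ?c1 = i" using lt by (simp add: mu_app)
  have nuc1: "nu n ?c1 = (y + (n - j)) mod n" by (simp add: nu_app)
  have PPc1: "PP m n ?c1 = {}" by (rule PP_no0) simp
  have murest: "mu m ?rest = ((m - i) mod m + x) mod m" using w by (simp add: mu_app)
  have nurest: "nu n ?rest = j" using w lt insert.prems arr2[of j n y] by (simp add: nu_app)
  have PPrest: "PP m n ?rest = (\<lambda>(a,b). (((m - i) mod m + a) mod m, b)) ` P"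
    using w by (simp add: PP_app PP_rep mu_app image_image case_prod_beta)
  show ?case
  proof (rule bexI[where x="?c1 @ 0 # ?rest"], intro conjI)
    show "mu m (?c1 @ 0 # ?rest) = x"
      using muc1 murest insert.prems lt by (simp only: mu_app mu_Cons0 arr) simp
    show "nu n (?c1 @ 0 # ?rest) = y"
    proof -
      have "nu n (?c1 @ 0 # ?rest) = ((y + (n - j)) mod n + j) mod n"
        using nuc1 nurest by (simp only: nu_app nu_Cons0)
      also have "\<dots> = y" using arr2[of y n j] lt insert.prems by (simp add: add.commute)
      finally show ?thesis .
    qed
    show "PP m n (?c1 @ 0 # ?rest) = insert ij P"
    proof -
      have "PP m n (?c1 @ 0 # ?rest) = (\<lambda>(a,b). ((i + a) mod m, b)) ` PP m n (0 # ?rest)"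
        by (subst PP_app) (simp only: PPc1 muc1 image_empty Un_empty_left)
      also have "\<dots> = insert (i, j) P"
      proof -
        let ?f = "\<lambda>(a::nat,b::nat). ((i + a) mod m, b)"
        let ?g = "\<lambda>(a::nat,b::nat). (a mod m, b)"
        let ?h = "\<lambda>(a::nat,b::nat). (((m - i) mod m + a) mod m, b)"
        have fx: "?f (?g (?h z)) = z" if "z \<in> P" for z
        proof -
          obtain a b where z: "z = (a,b)" by force
          have "a mod m = a" using PP_mod[of a b m n w] that z w by simp
          then show ?thesis using z arr[OF lt(1), of a] by simp
        qed
        have "?f ` ?g ` ?h ` P = P"
        proof -
          have "?f ` ?g ` ?h ` P = (\<lambda>z. ?f (?g (?h z))) ` P" by (simp only: image_image)
          also have "\<dots> = (\<lambda>z. z) ` P" by (rule image_cong) (simp_all only: fx)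
          finally show ?thesis by simp
        qed
        moreover have "?f (0, j) = (i, j)" using lt by simp
        ultimately show ?thesis unfolding PP_Cons0 PPrest nurest image_insert by simp
      qed
      finally show ?thesis using ij by simp
    qed
    show "?c1 @ 0 # ?rest \<in> lists A" using A w by auto
  qed
qed


lemma HH_image:
  assumes mn: "m > 0" "n > 0" and A: "A = {0,1,2::nat}"
  shows "HH m n ` lists A = insert None (Some ` ({..<m} \<times> {..<n} \<times> (Pow ({..<m} \<times> {..<n}) - {{..<m} \<times> {..<n}})))"
    (is "_ = insert None (Some ` ?X)")
proof (rule set_eqI, rule iffI)
  fix z assume "z \<in> HH m n ` lists A"
  then obtain w where "z = HH m n w" by auto
  then show "z \<in> insert None (Some ` ?X)"
    using PP_sub[OF mn, of w] mn unfolding HH_def by (auto simp: mu_def nu_def)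
next
  fix z assume z: "z \<in> insert None (Some ` ?X)"
  have A3: "0 \<in> A" "1 \<in> A" "2 \<in> A" using A by auto
  have fin: "finite ({..<m} \<times> {..<n})" by simp
  show "z \<in> HH m n ` lists A"
  proof (cases "z = None")
    case True
    obtain w where "w \<in> lists A" "PP m n w = {..<m} \<times> {..<n}"
      using realize[OF mn A3 fin subset_refl mn] by blast
    then show ?thesis using True unfolding HH_def by force
  next
    case False
    then obtain x y P where xyP: "z = Some (x,y,P)" "x < m" "y < n" "P \<subseteq> {..<m} \<times> {..<n}"
      "P \<noteq> {..<m} \<times> {..<n}" using z by auto
    have "finite P" using xyP(4) fin finite_subset by blast
    then obtain w where "w \<in> lists A" "mu m w = x" "nu n w = y" "PP m n w = P"
      using realize[OF mn A3 _ xyP(4) xyP(2,3)] by blast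
    then show ?thesis using xyP unfolding HH_def by force
  qed
qed

theorem proposition5:
  fixes m n :: nat
  assumes "m > 0" and "n > 0"
  shows "\<exists>(A :: nat set) a K L. finite A \<and> a \<in> A \<and> K \<subseteq> lists A \<and> L \<subseteq> lists A \<and>
           finite (syntactic_monoid A K) \<and> card (syntactic_monoid A K) = m \<and>
           finite (syntactic_monoid A L) \<and> card (syntactic_monoid A L) = n \<and>
           finite (syntactic_monoid A (lang_concat_letter K a L)) \<and>
           card (syntactic_monoid A (lang_concat_letter K a L)) = m * n * (2 ^ (m * n) - 1) + 1"
proof -
  define A :: "nat set" where "A = {0,1,2}"
  define K where "K = {w\<in>lists A. mu m w = 0}"
  define L where "L = {w\<in>lists A. nu n w = 0}"
  have A3: "0 \<in> A" "1 \<in> A" "2 \<in> A" "finite A" unfolding A_def by auto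
  have qK: "finite (syntactic_monoid A K) = finite (mu m ` lists A)"
           "card (syntactic_monoid A K) = card (mu m ` lists A)"
    using quot_card[of A K "mu m"] Klang_cong[OF assms(1) A3(2)] unfolding K_def by auto
  have qL: "finite (syntactic_monoid A L) = finite (nu n ` lists A)"
           "card (syntactic_monoid A L) = card (nu n ` lists A)"
    using quot_card[of A L "nu n"] Llang_cong[OF assms(2) A3(3)] unfolding L_def by auto
  have qKL: "finite (syntactic_monoid A (lang_concat_letter K 0 L)) = finite (HH m n ` lists A)"
           "card (syntactic_monoid A (lang_concat_letter K 0 L)) = card (HH m n ` lists A)"
    using quot_card[of A "lang_concat_letter K 0 L" "HH m n"] KaL_cong[OF assms A_def]
    unfolding K_def L_def by auto
  let ?S = "{..<m} \<times> {..<n}"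
  let ?X = "{..<m} \<times> {..<n} \<times> (Pow ?S - {?S})"
  have finX: "finite ?X" by simp
  have cX: "card ?X = m * (n * (2 ^ (m * n) - 1))"
  proof -
    have "card (Pow ?S) = 2 ^ (m * n)" by (simp add: card_Pow card_cartesian_product)
    then have "card (Pow ?S - {?S}) = 2 ^ (m * n) - 1" by (simp add: card_Diff_singleton)
    then show ?thesis by (simp only: card_cartesian_product card_lessThan)
  qed
  have cH: "card (HH m n ` lists A) = m * n * (2 ^ (m * n) - 1) + 1"
  proof -
    have "card (insert None (Some ` ?X)) = Suc (card (Some ` ?X))"
      using finX by (intro card_insert_disjoint) auto
    also have "card (Some ` ?X) = card ?X" by (rule card_image) simp
    finally show ?thesis unfolding HH_image[OF assms A_def] cX by simp
  qed
  have fH: "finite (HH m n ` lists A)" unfolding HH_image[OF assms A_def] using finX by simp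
  have KL: "K \<subseteq> lists A" "L \<subseteq> lists A" unfolding K_def L_def by auto
  have cK: "finite (syntactic_monoid A K)" "card (syntactic_monoid A K) = m"
    using qK mu_image[OF assms(1) A3(2)] by simp_all
  have cL: "finite (syntactic_monoid A L)" "card (syntactic_monoid A L) = n"
    using qL nu_image[OF assms(2) A3(3)] by simp_all
  have fKL: "finite (syntactic_monoid A (lang_concat_letter K 0 L))"
    "card (syntactic_monoid A (lang_concat_letter K 0 L)) = m * n * (2 ^ (m * n) - 1) + 1"
    using qKL cH fH by simp_all
  show ?thesis using A3 KL cK cL fKL by blast
qed

end
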